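(* Let $n\ge2$. Every finite rooted poset $F$ of height $n$ which validates $\mathbf{PL}$ is the image of a sawed tree of height $n$ under a surjective p-morphism.
   Context: A p-morphism $f\colon G\to F$ is a map with $f(\uparrow x)=\uparrow f(x)$ for all $x$. A finite tree is a finite rooted poset in which each $\downarrow x$ is a chain; $\mathrm{Top}(T)$ is its set of maximal elements. Let $T$ be a finite tree of height $>0$ all of whose top elements have the same height, with a plane ordering $\prec$ of $\mathrm{Top}(T)$ (a linear order such that each $\uparrow x\cap\mathrm{Top}(T)$ is a $\prec$-interval); enumerate $\mathrm{Top}(T)=\{t_1\prec\cdots\prec t_k\}$. The sawed tree based on $(T,\prec)$ is $T$ together with new elements $s_1,\dots,s_{k-1}$ with $t_i<s_i$ and $t_{i+1}<s_i$ (closed under transitivity). The height of a poset is the maximum of $|C|-1$ over chains $C$. For a finite rooted poset $Q$, $\chi(Q)$ is its Jankov–Fine formula: a frame validates $\chi(Q)$ iff it has no surjective p-morphism from an upset of it onto $Q$. The 3-fork is $\{r,a,b,c\}$ with $r<a,r<b,r<c$ only; the Scott frame is $\{r,u_1,u_2,v\}$ with $r<u_1<u_2$, $r<v$ (and $r<u_2$) only. $\mathbf{PL}$ is the smallest intermediate logic containing $\chi(\text{3-fork})$ and $\chi(\text{Scott frame})$. *)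

theory Defs
  imports Main
begin

definition is_poset :: "'a set \<Rightarrow> ('a \<Rightarrow> 'a \<Rightarrow> bool) \<Rightarrow> bool" where
  "is_poset W le \<longleftrightarrow>
     (\<forall>x\<in>W. le x x) \<and>
     (\<forall>x\<in>W. \<forall>y\<in>W. le x y \<and> le y x \<longrightarrow> x = y) \<and>
     (\<forall>x\<in>W. \<forall>y\<in>W. \<forall>z\<in>W. le x y \<and> le y z \<longrightarrow> le x z)"

definition is_root :: "'a set \<Rightarrow> ('a \<Rightarrow> 'a \<Rightarrow> bool) \<Rightarrow> 'a \<Rightarrow> bool" where
  "is_root W le r \<longleftrightarrow> r \<in> W \<and> (\<forall>x\<in>W. le r x)"

definition finite_rooted_poset :: "'a set \<Rightarrow> ('a \<Rightarrow> 'a \<Rightarrow> bool) \<Rightarrow> bool" where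
  "finite_rooted_poset W le \<longleftrightarrow> finite W \<and> is_poset W le \<and> (\<exists>r. is_root W le r)"

definition up :: "'a set \<Rightarrow> ('a \<Rightarrow> 'a \<Rightarrow> bool) \<Rightarrow> 'a \<Rightarrow> 'a set" where
  "up W le x = {y\<in>W. le x y}"

definition down :: "'a set \<Rightarrow> ('a \<Rightarrow> 'a \<Rightarrow> bool) \<Rightarrow> 'a \<Rightarrow> 'a set" where
  "down W le x = {y\<in>W. le y x}"

definition is_chain :: "('a \<Rightarrow> 'a \<Rightarrow> bool) \<Rightarrow> 'a set \<Rightarrow> bool" where
  "is_chain le C \<longleftrightarrow> (\<forall>x\<in>C. \<forall>y\<in>C. le x y \<or> le y x)"

definition has_height :: "'a set \<Rightarrow> ('a \<Rightarrow> 'a \<Rightarrow> bool) \<Rightarrow> nat \<Rightarrow> bool" where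
  "has_height W le n \<longleftrightarrow>
     (\<exists>C. C \<subseteq> W \<and> is_chain le C \<and> finite C \<and> card C = n + 1) \<and>
     (\<forall>C. C \<subseteq> W \<and> is_chain le C \<longrightarrow> finite C \<and> card C \<le> n + 1)"

definition is_upset :: "'a set \<Rightarrow> ('a \<Rightarrow> 'a \<Rightarrow> bool) \<Rightarrow> 'a set \<Rightarrow> bool" where
  "is_upset W le U \<longleftrightarrow> U \<subseteq> W \<and> (\<forall>x\<in>U. \<forall>y\<in>W. le x y \<longrightarrow> y \<in> U)"

definition p_morphism ::
  "'a set \<Rightarrow> ('a \<Rightarrow> 'a \<Rightarrow> bool) \<Rightarrow> 'b set \<Rightarrow> ('b \<Rightarrow> 'b \<Rightarrow> bool) \<Rightarrow> ('a \<Rightarrow> 'b) \<Rightarrow> bool" where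
  "p_morphism G leG F leF f \<longleftrightarrow>
     (\<forall>x\<in>G. f x \<in> F) \<and> (\<forall>x\<in>G. f ` up G leG x = up F leF (f x))"

definition surj_p_morphism ::
  "'a set \<Rightarrow> ('a \<Rightarrow> 'a \<Rightarrow> bool) \<Rightarrow> 'b set \<Rightarrow> ('b \<Rightarrow> 'b \<Rightarrow> bool) \<Rightarrow> ('a \<Rightarrow> 'b) \<Rightarrow> bool" where
  "surj_p_morphism G leG F leF f \<longleftrightarrow> p_morphism G leG F leF f \<and> f ` G = F"

text \<open>Frame (W, le) validates the Jankov--Fine formula of Q iff there is no surjective
  p-morphism from an upset of W onto Q.\<close>
definition validates_jankov_fine ::
  "'a set \<Rightarrow> ('a \<Rightarrow> 'a \<Rightarrow> bool) \<Rightarrow> 'b set \<Rightarrow> ('b \<Rightarrow> 'b \<Rightarrow> bool) \<Rightarrow> bool" where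
  "validates_jankov_fine W le Q leQ \<longleftrightarrow>
     \<not> (\<exists>U f. is_upset W le U \<and> surj_p_morphism U le Q leQ f)"

text \<open>3-fork: r = 0, a = 1, b = 2, c = 3.\<close>
definition fork3 :: "nat set" where "fork3 = {0, 1, 2, 3}"
definition fork3_le :: "nat \<Rightarrow> nat \<Rightarrow> bool" where
  "fork3_le x y \<longleftrightarrow> x = y \<or> x = 0"

text \<open>Scott frame: r = 0, u1 = 1, u2 = 2, v = 3.\<close>
definition scott :: "nat set" where "scott = {0, 1, 2, 3}"
definition scott_le :: "nat \<Rightarrow> nat \<Rightarrow> bool" where
  "scott_le x y \<longleftrightarrow> x = y \<or> x = 0 \<or> (x = 1 \<and> y = 2)"

text \<open>A frame validates PL (the least intermediate logic containing the two Jankov--Fine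
  formulas) iff it validates both Jankov--Fine formulas (frame validity is closed under
  modus ponens and substitution).\<close>
definition validates_PL :: "'a set \<Rightarrow> ('a \<Rightarrow> 'a \<Rightarrow> bool) \<Rightarrow> bool" where
  "validates_PL W le \<longleftrightarrow>
     validates_jankov_fine W le fork3 fork3_le \<and> validates_jankov_fine W le scott scott_le"

definition finite_tree :: "'a set \<Rightarrow> ('a \<Rightarrow> 'a \<Rightarrow> bool) \<Rightarrow> bool" where
  "finite_tree T le \<longleftrightarrow> finite_rooted_poset T le \<and> (\<forall>x\<in>T. is_chain le (down T le x))"

definition tops :: "'a set \<Rightarrow> ('a \<Rightarrow> 'a \<Rightarrow> bool) \<Rightarrow> 'a set" where
  "tops T le = {x\<in>T. \<forall>y\<in>T. le x y \<longrightarrow> y = x}"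

text \<open>A plane ordering of Top(T), given as the enumeration list ts = [t_1, ..., t_k]
  (t_i \<prec> t_j iff i < j); each \<up>x \<inter> Top(T) must be a \<prec>-interval.\<close>
definition plane_enum :: "'a set \<Rightarrow> ('a \<Rightarrow> 'a \<Rightarrow> bool) \<Rightarrow> 'a list \<Rightarrow> bool" where
  "plane_enum T le ts \<longleftrightarrow> distinct ts \<and> set ts = tops T le \<and>
     (\<forall>x\<in>T. \<forall>i j l. i < j \<and> j < l \<and> l < length ts \<and>
        le x (ts ! i) \<and> le x (ts ! l) \<longrightarrow> le x (ts ! j))"

text \<open>Data of a sawed tree: a finite tree of height > 0 whose top elements all have the
  same height (depth), together with a plane ordering of its tops.\<close>
definition sawed_tree_data :: "'a set \<Rightarrow> ('a \<Rightarrow> 'a \<Rightarrow> bool) \<Rightarrow> 'a list \<Rightarrow> bool" where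
  "sawed_tree_data T le ts \<longleftrightarrow> finite_tree T le \<and> (\<exists>m>0. has_height T le m) \<and>
     (\<forall>t\<in>tops T le. \<forall>t'\<in>tops T le. card (down T le t) = card (down T le t')) \<and>
     plane_enum T le ts"

text \<open>The sawed tree: Inl x for x \<in> T, and Inr i (i < k - 1, 0-based) for the new element
  s_(i+1) lying above t_(i+1) and t_(i+2) (1-based), i.e. above ts!i and ts!(i+1).\<close>
definition sawed_carrier :: "'a set \<Rightarrow> 'a list \<Rightarrow> ('a + nat) set" where
  "sawed_carrier T ts = Inl ` T \<union> Inr ` {i. Suc i < length ts}"

fun sawed_le :: "('a \<Rightarrow> 'a \<Rightarrow> bool) \<Rightarrow> 'a list \<Rightarrow> 'a + nat \<Rightarrow> 'a + nat \<Rightarrow> bool" where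
  "sawed_le le ts (Inl a) (Inl b) = le a b"
| "sawed_le le ts (Inl a) (Inr i) = (le a (ts ! i) \<or> le a (ts ! Suc i))"
| "sawed_le le ts (Inr i) (Inl b) = False"
| "sawed_le le ts (Inr i) (Inr j) = (i = j)"

end

theory Submission
  imports Defs "HOL-Library.Nat_Bijection"
begin

locale plf =
  fixes F :: "'a set" and le :: "'a \<Rightarrow> 'a \<Rightarrow> bool"
  assumes fin: "finite F" and po: "is_poset F le" and PL: "validates_PL F le"
begin
lemma prefl: "x \<in> F \<Longrightarrow> le x x" using po unfolding is_poset_def by blast
lemma pantisym: "x \<in> F \<Longrightarrow> y \<in> F \<Longrightarrow> le x y \<Longrightarrow> le y x \<Longrightarrow> x = y"
  using po unfolding is_poset_def by blast
lemma ptrans: "x \<in> F \<Longrightarrow> y \<in> F \<Longrightarrow> z \<in> F \<Longrightarrow> le x y \<Longrightarrow> le y z \<Longrightarrow> le x z"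
  using po unfolding is_poset_def by blast

definition maxl where "maxl m \<longleftrightarrow> m \<in> F \<and> (\<forall>z\<in>F. le m z \<longrightarrow> z = m)"
definition Mx where "Mx x = {m. maxl m \<and> le x m}"
definition dle where "dle x k \<longleftrightarrow> (\<forall>C. C \<subseteq> up F le x \<and> is_chain le C \<longrightarrow> card C \<le> Suc k)"

lemma up_sub: "up F le x \<subseteq> F" by (auto simp: up_def)

lemma exists_max: assumes "x \<in> F" shows "\<exists>m. maxl m \<and> le x m"
proof -
  have "x \<in> up F le x" using assms prefl unfolding up_def by blast
  then obtain m where m: "m \<in> up F le x" and mn: "\<forall>z. z \<in> up F le x \<longrightarrow> card (up F le m) \<le> card (up F le z)"
    using ex_has_least_nat[where P="\<lambda>z. z \<in> up F le x" and m="\<lambda>z. card (up F le z)"] by blast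
  have mF: "m \<in> F" "le x m" using m unfolding up_def by auto
  have "maxl m"
    unfolding maxl_def
  proof (intro conjI ballI impI)
    show "m \<in> F" by fact
    fix z assume z: "z \<in> F" "le m z"
    show "z = m"
    proof (rule ccontr)
      assume ne: "z \<noteq> m"
      have sub: "up F le z \<subseteq> up F le m" using z mF ptrans unfolding up_def by blast
      have "m \<notin> up F le z" using ne z mF pantisym unfolding up_def by blast
      moreover have "m \<in> up F le m" using mF prefl unfolding up_def by blast
      ultimately have "up F le z \<subset> up F le m" using sub by blast
      hence "card (up F le z) < card (up F le m)"
        using fin up_sub by (meson psubset_card_mono rev_finite_subset)
      moreover have "z \<in> up F le x" using z mF ptrans assms unfolding up_def by blast
      ultimately show False using mn by (meson not_le)
    qed
  qed
  thus ?thesis using mF by blast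
qed

lemma Mx_nonempty: "x \<in> F \<Longrightarrow> Mx x \<noteq> {}"
  using exists_max by (auto simp: Mx_def)

lemma maxl_F: "maxl m \<Longrightarrow> m \<in> F" by (simp add: maxl_def)

lemma up_maxl: "maxl m \<Longrightarrow> up F le m = {m}"
  using prefl unfolding maxl_def up_def by blast

lemma Mx_maxl: "maxl m \<Longrightarrow> Mx m = {m}"
  using prefl unfolding maxl_def Mx_def by blast

lemma Mx_mono: "x \<in> F \<Longrightarrow> y \<in> F \<Longrightarrow> le x y \<Longrightarrow> Mx y \<subseteq> Mx x"
  using ptrans unfolding Mx_def maxl_def by blast

lemma Mx_F: "m \<in> Mx x \<Longrightarrow> m \<in> F" by (auto simp: Mx_def maxl_def)

lemma no_scott:
  assumes x: "x \<in> F"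
    and part: "P \<union> Q = up F le x - {x}" "P \<inter> Q = {}"
    and Pup: "\<forall>z\<in>P. \<forall>w\<in>F. le z w \<longrightarrow> w \<in> P"
    and Qup: "\<forall>z\<in>Q. \<forall>w\<in>F. le z w \<longrightarrow> w \<in> Q"
    and y: "y \<in> P" "\<not> maxl y"
    and Qne: "q \<in> Q"
  shows False
proof -
  define f where "f z = (if z = x then 0 else if z \<in> Q then 3 else if maxl z then 2 else (1::nat))" for z
  define U where "U = up F le x"
  have PU: "P \<subseteq> U" "Q \<subseteq> U" using part unfolding U_def by auto
  have xU: "x \<in> U" using x prefl unfolding U_def up_def by blast
  have Uup: "is_upset F le U" using x ptrans unfolding is_upset_def U_def up_def by blast
  have upU: "z \<in> U \<Longrightarrow> up U le z = up F le z" for z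
    using Uup by (auto simp: up_def is_upset_def)
  have yF: "y \<in> F" "y \<noteq> x" "le x y" using y part by (auto simp: up_def)
  obtain my where my: "maxl my" "le y my" using exists_max yF by blast
  have myP: "my \<in> P" using Pup y my maxl_F by blast
  have myx: "my \<noteq> x" using myP part by auto
  have img_x: "f ` U = {0,1,2,3}"
  proof
    show "f ` U \<subseteq> {0,1,2,3}" by (auto simp: f_def)
    have "f x = 0" by (simp add: f_def)
    moreover have "f y = 1" using y yF part by (auto simp: f_def)
    moreover have "f my = 2" using my myP myx part by (auto simp: f_def)
    moreover have "f q = 3" using Qne part by (auto simp: f_def)
    moreover have "q \<in> U" "y \<in> U" "my \<in> U" using PU Qne y myP by auto
    ultimately show "{0,1,2,3} \<subseteq> f ` U" using xU by (metis empty_subsetI image_eqI insert_subset)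
  qed
  have pm: "surj_p_morphism U le scott scott_le f"
    unfolding surj_p_morphism_def p_morphism_def
  proof (intro conjI ballI)
    fix z assume z: "z \<in> U"
    show "f z \<in> scott" by (auto simp: f_def scott_def)
    have zF: "z \<in> F" using z by (auto simp: U_def up_def)
    show "f ` up U le z = up scott scott_le (f z)"
    proof (cases "z = x")
      case True
      have "up U le z = U" using True x by (auto simp: U_def up_def)
      then show ?thesis using True img_x by (auto simp: f_def up_def scott_def scott_le_def)
    next
      case zx: False
      hence zPQ: "z \<in> P \<or> z \<in> Q" using z part by (auto simp: U_def)
      have wnx: "w \<noteq> x" if "w \<in> up F le z" for w
        using that zx pantisym zF x z unfolding up_def U_def by blast
      show ?thesis
      proof (cases "z \<in> Q")
        case True
        have "\<forall>w \<in> up F le z. f w = 3" using Qup True wnx by (auto simp: up_def f_def)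
        moreover have "z \<in> up F le z" using zF prefl unfolding up_def by blast
        ultimately have "f ` up F le z = {3}" by force
        then show ?thesis using upU[OF z] True zx
          by (auto simp: f_def up_def scott_def scott_le_def)
      next
        case nQ: False
        hence zP: "z \<in> P" using zPQ by auto
        have wP: "w \<in> P" "w \<notin> Q" if "w \<in> up F le z" for w
          using that Pup zP part by (auto simp: up_def)
        show ?thesis
        proof (cases "maxl z")
          case True
          then show ?thesis using upU[OF z] up_maxl[OF True] nQ zx
            by (auto simp: f_def up_def scott_def scott_le_def)
        next
          case nm: False
          obtain mz where mz: "maxl mz" "le z mz" using exists_max zF by blast
          have mzu: "mz \<in> up F le z" using mz maxl_F by (auto simp: up_def)
          have "f mz = 2" using wP[OF mzu] wnx[OF mzu] mz by (auto simp: f_def)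
          moreover have "f z = 1" using nm nQ zx by (auto simp: f_def)
          moreover have "z \<in> up F le z" using zF prefl unfolding up_def by blast
          moreover have "\<forall>w\<in>up F le z. f w \<in> {1,2}" using wP wnx by (auto simp: f_def)
          ultimately have "f ` up F le z = {1,2}" using mzu by (auto intro: rev_image_eqI)
          then show ?thesis using upU[OF z] nm nQ zx
            by (auto simp: f_def up_def scott_def scott_le_def)
        qed
      qed
    qed
  next
    show "f ` U = scott" using img_x by (simp add: scott_def)
  qed
  thus False using PL Uup by (auto simp: validates_PL_def validates_jankov_fine_def)
qed

lemma no_fork:
  assumes x: "x \<in> F" and allmax: "\<forall>w \<in> up F le x - {x}. maxl w"
    and abc: "a \<in> up F le x - {x}" "b \<in> up F le x - {x}" "c \<in> up F le x - {x}"
       "a \<noteq> b" "a \<noteq> c" "b \<noteq> c"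
  shows False
proof -
  define f where "f z = (if z = x then 0 else if z = a then 1 else if z = b then 2 else (3::nat))" for z
  define U where "U = up F le x"
  have xU: "x \<in> U" using x prefl unfolding U_def up_def by blast
  have Uup: "is_upset F le U" using x ptrans unfolding is_upset_def U_def up_def by blast
  have upU: "z \<in> U \<Longrightarrow> up U le z = up F le z" for z
    using Uup by (auto simp: up_def is_upset_def)
  have img_x: "f ` U = {0,1,2,3}"
  proof
    show "f ` U \<subseteq> {0,1,2,3}" by (auto simp: f_def)
    have "f x = 0" "f a = 1" "f b = 2" "f c = 3" using abc by (auto simp: f_def)
    moreover have "a \<in> U" "b \<in> U" "c \<in> U" using abc by (auto simp: U_def)
    ultimately show "{0,1,2,3} \<subseteq> f ` U" using xU by (metis empty_subsetI image_eqI insert_subset)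
  qed
  have pm: "surj_p_morphism U le fork3 fork3_le f"
    unfolding surj_p_morphism_def p_morphism_def
  proof (intro conjI ballI)
    fix z assume z: "z \<in> U"
    show "f z \<in> fork3" by (auto simp: f_def fork3_def)
    show "f ` up U le z = up fork3 fork3_le (f z)"
    proof (cases "z = x")
      case True
      have "up U le z = U" using True x by (auto simp: U_def up_def)
      then show ?thesis using True img_x by (auto simp: f_def up_def fork3_def fork3_le_def)
    next
      case False
      hence "maxl z" using allmax z by (auto simp: U_def)
      moreover have "f z \<noteq> 0" using False by (auto simp: f_def)
      ultimately show ?thesis using upU[OF z] up_maxl
        by (auto simp: up_def fork3_def fork3_le_def f_def)
    qed
  next
    show "f ` U = fork3" using img_x by (simp add: fork3_def)
  qed
  thus False using PL Uup by (auto simp: validates_PL_def validates_jankov_fine_def)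
qed

end

context plf
begin

fun Valid :: "nat \<Rightarrow> 'a \<times> 'a \<times> 'a \<Rightarrow> bool" where
  "Valid h (x,a,b) = (x \<in> F \<and> a \<in> Mx x \<and> b \<in> Mx x \<and> dle x (Suc h) \<and> (h = 0 \<longrightarrow> up F le x = {x,a,b}))"

fun pathOK :: "'a \<Rightarrow> ('a \<times> 'a \<times> 'a) list \<Rightarrow> 'a \<Rightarrow> bool" where
  "pathOK a [] b = (a = b)"
| "pathOK a (c#cs) b = (fst (snd c) = a \<and> pathOK (snd (snd c)) cs b)"

definition WalkOK :: "nat \<Rightarrow> 'a \<Rightarrow> 'a \<Rightarrow> 'a \<Rightarrow> ('a \<times> 'a \<times> 'a) list \<Rightarrow> bool" where
  "WalkOK h x a b cs \<longleftrightarrow> (\<exists>mid. cs = (a,a,a) # mid @ [(b,b,b)]) \<and> pathOK a cs b \<and>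
     (\<forall>c\<in>set cs. Valid h c \<and> le x (fst c)) \<and>
     up F le x \<subseteq> insert x (\<Union>c\<in>set cs. up F le (fst c))"

lemma pathOK_append: "pathOK a xs b \<Longrightarrow> pathOK b ys c \<Longrightarrow> pathOK a (xs @ ys) c"
  by (induction xs arbitrary: a) auto

lemma finite_up: "finite (up F le x)" using fin up_sub by (rule rev_finite_subset)

lemma dle_mono: "dle x k \<Longrightarrow> k \<le> k' \<Longrightarrow> dle x k'"
  unfolding dle_def by (meson Suc_le_mono le_trans)

lemma dle_succ:
  assumes x: "x \<in> F" and d: "dle x (Suc k)" and y: "y \<in> F" "le x y" "y \<noteq> x"
  shows "dle y k"
  unfolding dle_def
proof (intro allI impI)
  fix C assume C: "C \<subseteq> up F le y \<and> is_chain le C"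
  have CF: "C \<subseteq> F" using C unfolding up_def by blast
  have xC: "x \<notin> C"
  proof
    assume "x \<in> C" hence "le y x" using C unfolding up_def by blast
    thus False using y x pantisym by blast
  qed
  have xle: "\<forall>c\<in>C. le x c" using C x y CF ptrans unfolding up_def by blast
  have "insert x C \<subseteq> up F le x" using CF x xle prefl unfolding up_def by blast
  moreover have "is_chain le (insert x C)" using C xle x prefl unfolding is_chain_def by blast
  ultimately have "card (insert x C) \<le> Suc (Suc k)" using d unfolding dle_def by blast
  moreover have "finite C" using CF fin rev_finite_subset by blast
  ultimately show "card C \<le> Suc k" using xC by simp
qed

lemma maxl_dle: "maxl a \<Longrightarrow> dle a k"
  unfolding dle_def
proof (intro allI impI)
  fix C assume "maxl a" "C \<subseteq> up F le a \<and> is_chain le C"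
  hence "C \<subseteq> {a}" using up_maxl by blast
  hence "card C \<le> card {a}" by (intro card_mono) auto
  thus "card C \<le> Suc k" by simp
qed

lemma Valid_loop: "maxl a \<Longrightarrow> Valid h (a,a,a)"
  using Mx_maxl maxl_dle up_maxl maxl_F by auto

lemma dle0_max: assumes "x \<in> F" "dle x 0" shows "maxl x"
  unfolding maxl_def
proof (intro conjI ballI impI)
  show "x \<in> F" by fact
  fix z assume z: "z \<in> F" "le x z"
  show "z = x"
  proof (rule ccontr)
    assume ne: "z \<noteq> x"
    have "{x,z} \<subseteq> up F le x" using z assms prefl unfolding up_def by blast
    moreover have "is_chain le {x,z}" using z assms prefl unfolding is_chain_def by blast
    ultimately have "card {x,z} \<le> 1" using assms unfolding dle_def by fastforce
    thus False using ne by simp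
  qed
qed

lemma dle1_succmax:
  assumes x: "x \<in> F" and d: "dle x 1" and y: "y \<in> up F le x" "y \<noteq> x"
  shows "maxl y"
proof -
  have yF: "y \<in> F" "le x y" using y unfolding up_def by auto
  have "dle y 0" using dle_succ[of x 0 y] x d yF y(2) by simp
  thus ?thesis using dle0_max yF by blast
qed

lemma not_dle_nonmax:
  assumes x: "x \<in> F" and nd: "\<not> dle x k" and k: "k \<ge> 1"
  shows "\<exists>y\<in>F. le x y \<and> y \<noteq> x \<and> \<not> maxl y"
proof -
  obtain C where C: "C \<subseteq> up F le x" "is_chain le C" "card C > Suc k"
    using nd unfolding dle_def by (meson not_le)
  have CF: "C \<subseteq> F" using C unfolding up_def by blast
  have fC: "finite C" using CF fin rev_finite_subset by blast
  have "card C - card {x} \<le> card (C - {x})" by (rule diff_card_le_card_Diff) simp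
  hence c2: "Suc (Suc 0) \<le> card (C - {x})" using C(3) k by simp
  then obtain y B where yB: "C - {x} = insert y B" "y \<notin> B" "Suc 0 \<le> card B" "finite B"
    unfolding card_le_Suc_iff by blast
  then obtain z B' where zB: "B = insert z B'" unfolding card_le_Suc_iff by blast
  have y: "y \<in> C - {x}" using yB by blast
  have z: "z \<in> C - {x} - {y}" using yB zB by blast
  have yz: "le y z \<or> le z y" using C(2) y z unfolding is_chain_def by blast
  have lx: "le x y" "le x z" using y z C(1) unfolding up_def by auto
  show ?thesis
  proof (cases "le y z")
    case True
    then show ?thesis using y z CF lx unfolding maxl_def by blast
  next
    case False
    then show ?thesis using yz y z CF lx unfolding maxl_def by blast
  qed
qed

end

context plf
begin

lemma case_B1:
  assumes x: "x \<in> F" and d1: "dle x 1" and nm: "\<not> maxl x" and a: "a \<in> Mx x"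
  shows "\<exists>ot \<in> Mx x. up F le x = {x, a, ot}"
proof -
  have allmax: "\<forall>w \<in> up F le x - {x}. maxl w" using dle1_succmax x d1 by blast
  have Mxsub: "Mx x \<subseteq> up F le x - {x}" using nm unfolding Mx_def maxl_def up_def by blast
  have upsub: "up F le x - {x} \<subseteq> Mx x" using allmax unfolding Mx_def up_def by blast
  have xu: "x \<in> up F le x" using x prefl unfolding up_def by blast
  show ?thesis
  proof (cases "\<exists>c\<in>Mx x. c \<noteq> a")
    case True
    then obtain c where c: "c \<in> Mx x" "c \<noteq> a" by blast
    have "up F le x \<subseteq> {x, a, c}"
    proof
      fix w assume w: "w \<in> up F le x"
      show "w \<in> {x, a, c}"
      proof (rule ccontr)
        assume "w \<notin> {x,a,c}"
        thus False using no_fork[OF x allmax, of a c w] a c w Mxsub by blast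
      qed
    qed
    moreover have "{x,a,c} \<subseteq> up F le x" using a c Mxsub xu by blast
    ultimately show ?thesis using c by blast
  next
    case False
    have "up F le x = {x, a, a}" using False upsub xu a Mxsub by blast
    then show ?thesis using a by blast
  qed
qed

definition E :: "'a \<Rightarrow> 'a \<Rightarrow> 'a \<Rightarrow> bool" where
  "E x c d \<longleftrightarrow> (\<exists>y\<in>F. le x y \<and> y \<noteq> x \<and> c \<in> Mx y \<and> d \<in> Mx y)"

lemma conn:
  assumes x: "x \<in> F" and y: "y \<in> F" "le x y" "y \<noteq> x" "\<not> maxl y"
    and a: "a \<in> Mx x" and b: "b \<in> Mx x"
  shows "(E x)\<^sup>*\<^sup>* a b"
proof (rule ccontr)
  assume nb: "\<not> (E x)\<^sup>*\<^sup>* a b"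
  define R where "R = {c. (E x)\<^sup>*\<^sup>* a c}"
  define P where "P = {z \<in> F. le x z \<and> z \<noteq> x \<and> Mx z \<inter> R \<noteq> {}}"
  define Q where "Q = {z \<in> F. le x z \<and> z \<noteq> x \<and> Mx z \<inter> R = {}}"
  have part: "P \<union> Q = up F le x - {x}" "P \<inter> Q = {}"
    unfolding P_def Q_def up_def by blast+
  have Pup: "\<forall>z\<in>P. \<forall>w\<in>F. le z w \<longrightarrow> w \<in> P"
  proof (intro ballI impI)
    fix z w assume z: "z \<in> P" and w: "w \<in> F" "le z w"
    have zF: "z \<in> F" "le x z" "z \<noteq> x" using z unfolding P_def by auto
    obtain c where c: "c \<in> Mx z" "c \<in> R" using z unfolding P_def by blast
    obtain d where d: "d \<in> Mx w" using Mx_nonempty w by blast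
    have dz: "d \<in> Mx z" using Mx_mono[OF zF(1) w(1) w(2)] d by blast
    have "E x c d" unfolding E_def using zF c dz by blast
    hence dR: "d \<in> R" using c unfolding R_def by (auto intro: rtranclp.rtrancl_into_rtrancl)
    have "le x w" using ptrans zF w x by blast
    moreover have "w \<noteq> x" using pantisym zF w x by blast
    ultimately show "w \<in> P" unfolding P_def using w d dR by blast
  qed
  have Qup: "\<forall>z\<in>Q. \<forall>w\<in>F. le z w \<longrightarrow> w \<in> Q"
  proof (intro ballI impI)
    fix z w assume z: "z \<in> Q" and w: "w \<in> F" "le z w"
    have zF: "z \<in> F" "le x z" "z \<noteq> x" "Mx z \<inter> R = {}" using z unfolding Q_def by auto
    have "Mx w \<subseteq> Mx z" using Mx_mono[OF zF(1) w(1) w(2)] .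
    moreover have "le x w" using ptrans zF w x by blast
    moreover have "w \<noteq> x" using pantisym zF w x by blast
    ultimately show "w \<in> Q" unfolding Q_def using w zF(4) by blast
  qed
  have am: "maxl a" "le x a" using a unfolding Mx_def by auto
  have bm: "maxl b" "le x b" using b unfolding Mx_def by auto
  have ax: "a \<noteq> x" using am y maxl_def by blast
  have bx: "b \<noteq> x" using bm y maxl_def by blast
  have aP: "a \<in> P" unfolding P_def R_def using am ax Mx_maxl[OF am(1)] maxl_F[OF am(1)] by auto
  have bQ: "b \<in> Q" unfolding Q_def R_def using bm bx Mx_maxl[OF bm(1)] maxl_F[OF bm(1)] nb by auto
  have yPQ: "y \<in> P \<or> y \<in> Q" using part y unfolding up_def by blast
  show False
  proof (cases "y \<in> P")
    case True
    show False by (rule no_scott[OF x part Pup Qup True y(4) bQ])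
  next
    case False
    hence yQ: "y \<in> Q" using yPQ by blast
    have part': "Q \<union> P = up F le x - {x}" "Q \<inter> P = {}" using part by blast+
    show False by (rule no_scott[OF x part' Qup Pup yQ y(4) aP])
  qed
qed

definition Eh :: "nat \<Rightarrow> 'a \<Rightarrow> 'a \<Rightarrow> 'a \<Rightarrow> bool" where
  "Eh h x c d \<longleftrightarrow> (\<exists>y\<in>F. le x y \<and> y \<noteq> x \<and> Valid h (y,c,d))"

lemma path_of:
  assumes r: "(Eh h x)\<^sup>*\<^sup>* c d"
  shows "\<exists>ps. pathOK c ps d \<and> (\<forall>s\<in>set ps. Valid h s \<and> le x (fst s))"
  using r
proof (induction rule: rtranclp_induct)
  case base
  then show ?case by (intro exI[of _ "[]"]) simp
next
  case (step d e)
  then obtain ps where ps: "pathOK c ps d" "\<forall>s\<in>set ps. Valid h s \<and> le x (fst s)" by blast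
  obtain y where y: "y \<in> F" "le x y" "y \<noteq> x" "Valid h (y,d,e)" using step(2) unfolding Eh_def by blast
  have "pathOK c (ps @ [(y,d,e)]) e" using pathOK_append[OF ps(1)] by simp
  then show ?case using ps(2) y by (intro exI[of _ "ps @ [(y,d,e)]"]) auto
qed

lemma E_Eh:
  assumes x: "x \<in> F" and dx: "dle x (Suc (Suc h))" and e: "E x c d"
  shows "(Eh h x)\<^sup>*\<^sup>* c d"
proof -
  obtain y where y: "y \<in> F" "le x y" "y \<noteq> x" "c \<in> Mx y" "d \<in> Mx y" using e unfolding E_def by blast
  have dy: "dle y (Suc h)" using dle_succ[OF x dx y(1-3)] .
  show ?thesis
  proof (cases "h = 0")
    case False
    hence "Eh h x c d" unfolding Eh_def using y dy by auto
    thus ?thesis by blast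
  next
    case h0: True
    show ?thesis
    proof (cases "maxl y")
      case True
      hence "c = d" using y Mx_maxl by auto
      thus ?thesis by blast
    next
      case False
      obtain ot where ot: "ot \<in> Mx y" "up F le y = {y, c, ot}"
        using case_B1[OF y(1) _ False y(4)] dy h0 by auto
      have "d \<in> up F le y" "d \<noteq> y" using y(5) False unfolding Mx_def up_def by (auto dest: maxl_F)
      hence "d = c \<or> d = ot" using ot by auto
      thus ?thesis
      proof
        assume "d = c" thus ?thesis by blast
      next
        assume dot: "d = ot"
        have "Valid h (y,c,d)" using y dy h0 ot dot by auto
        hence "Eh h x c d" unfolding Eh_def using y by blast
        thus ?thesis by blast
      qed
    qed
  qed
qed

lemma Estar_Eh:
  assumes x: "x \<in> F" and dx: "dle x (Suc (Suc h))" and r: "(E x)\<^sup>*\<^sup>* c d"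
  shows "(Eh h x)\<^sup>*\<^sup>* c d"
  using r
proof (induction rule: rtranclp_induct)
  case base then show ?case by blast
next
  case (step d e)
  then show ?case using E_Eh[OF x dx step(2)] by (meson rtranclp_trans)
qed

lemma round_trip:
  assumes x: "x \<in> F" and dx: "dle x (Suc (Suc h))" and y: "y \<in> F" "le x y" "y \<noteq> x"
  shows "\<exists>g rt. g \<in> Mx y \<and> pathOK g rt g \<and> (\<forall>s\<in>set rt. Valid h s \<and> le x (fst s)) \<and>
     y \<in> (\<Union>s\<in>set rt. up F le (fst s))"
proof -
  have dy: "dle y (Suc h)" using dle_succ[OF x dx y] .
  obtain g where g: "g \<in> Mx y" using Mx_nonempty y by blast
  have yy: "y \<in> up F le y" using y prefl unfolding up_def by blast
  show ?thesis
  proof (cases "h = 0 \<and> \<not> maxl y")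
    case False
    have "Valid h (y,g,g)"
    proof (cases "h = 0")
      case True
      hence "maxl y" using False by blast
      hence "g = y" using g Mx_maxl by auto
      thus ?thesis using \<open>maxl y\<close> Valid_loop by simp
    next
      case False
      thus ?thesis using y g dy by simp
    qed
    thus ?thesis using g y yy by (intro exI[of _ g] exI[of _ "[(y,g,g)]"]) auto
  next
    case True
    obtain ot where ot: "ot \<in> Mx y" "up F le y = {y, g, ot}"
      using case_B1[OF y(1) _ _ g] dy True by auto
    have "Valid h (y,g,ot)" "Valid h (y,ot,g)" using y dy True g ot by auto
    thus ?thesis using g y yy by (intro exI[of _ g] exI[of _ "[(y,g,ot),(y,ot,g)]"]) auto
  qed
qed

lemma cover_loop:
  assumes x: "x \<in> F" and dx: "dle x (Suc (Suc h))"
    and y0: "y0 \<in> F" "le x y0" "y0 \<noteq> x" "\<not> maxl y0"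
  shows "set ys \<subseteq> up F le x - {x} \<Longrightarrow> a \<in> Mx x \<Longrightarrow>
     \<exists>ps. pathOK a ps a \<and> (\<forall>s\<in>set ps. Valid h s \<and> le x (fst s)) \<and> set ys \<subseteq> (\<Union>s\<in>set ps. up F le (fst s))"
proof (induction ys)
  case Nil
  then show ?case by (intro exI[of _ "[]"]) simp
next
  case (Cons y ys)
  then obtain ps where ps: "pathOK a ps a" "\<forall>s\<in>set ps. Valid h s \<and> le x (fst s)"
     "set ys \<subseteq> (\<Union>s\<in>set ps. up F le (fst s))" by auto
  have yF: "y \<in> F" "le x y" "y \<noteq> x" using Cons(2) unfolding up_def by auto
  obtain g rt where g: "g \<in> Mx y" "pathOK g rt g" "\<forall>s\<in>set rt. Valid h s \<and> le x (fst s)"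
     "y \<in> (\<Union>s\<in>set rt. up F le (fst s))" using round_trip[OF x dx yF] by blast
  have gx: "g \<in> Mx x" using Mx_mono[OF x yF(1) yF(2)] g by blast
  obtain p1 where p1: "pathOK a p1 g" "\<forall>s\<in>set p1. Valid h s \<and> le x (fst s)"
    using path_of[OF Estar_Eh[OF x dx conn[OF x y0 Cons(3) gx]]] by blast
  obtain p2 where p2: "pathOK g p2 a" "\<forall>s\<in>set p2. Valid h s \<and> le x (fst s)"
    using path_of[OF Estar_Eh[OF x dx conn[OF x y0 gx Cons(3)]]] by blast
  define qs where "qs = p1 @ rt @ p2 @ ps"
  have "pathOK a qs a" unfolding qs_def
    by (rule pathOK_append[OF p1(1)], rule pathOK_append[OF g(2)],
        rule pathOK_append[OF p2(1) ps(1)])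
  moreover have "\<forall>s\<in>set qs. Valid h s \<and> le x (fst s)" unfolding qs_def using p1 p2 ps g by auto
  moreover have "set (y#ys) \<subseteq> (\<Union>s\<in>set qs. up F le (fst s))" unfolding qs_def using ps(3) g(4) by auto
  ultimately show ?case by blast
qed

lemma walk_exists:
  assumes v: "Valid (Suc h) (x,a,b)"
  shows "\<exists>cs. WalkOK h x a b cs"
proof -
  have x: "x \<in> F" and a: "a \<in> Mx x" and b: "b \<in> Mx x" and dx: "dle x (Suc (Suc h))"
    using v by auto
  have am: "maxl a" "le x a" using a unfolding Mx_def by auto
  have bm: "maxl b" "le x b" using b unfolding Mx_def by auto
  have va: "Valid h (a,a,a)" and vb: "Valid h (b,b,b)" using Valid_loop am bm by auto
  have xu: "x \<in> up F le x" using x prefl unfolding up_def by blast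
  show ?thesis
  proof (cases "dle x (Suc h)")
    case dS: True
    show ?thesis
    proof (cases "h = 0 \<and> \<not> maxl x")
      case False
      have vx: "Valid h (x,a,b)"
      proof (cases "h = 0")
        case True
        hence mx: "maxl x" using False by blast
        hence "a = x" "b = x" using a b Mx_maxl by auto
        thus ?thesis using mx Valid_loop by simp
      next
        case False
        thus ?thesis using x a b dS by simp
      qed
      define cs where "cs = [(a,a,a),(x,a,b),(b,b,b)]"
      have "WalkOK h x a b cs" unfolding WalkOK_def cs_def
        using va vb vx am bm x prefl xu by auto
      thus ?thesis by blast
    next
      case True
      have d1: "dle x 1" using dS True by simp
      have nm: "\<not> maxl x" using True by blast
      obtain ot where ot: "ot \<in> Mx x" "up F le x = {x,a,ot}" using case_B1[OF x d1 nm a] by blast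
      show ?thesis
      proof (cases "b = a")
        case True
        have v1: "Valid h (x,a,ot)" "Valid h (x,ot,a)" using \<open>h = 0 \<and> \<not> maxl x\<close> x a ot d1 by auto
        define cs where "cs = [(a,a,a),(x,a,ot),(x,ot,a),(a,a,a)]"
        have "WalkOK h x a b cs" unfolding WalkOK_def cs_def
          using va v1 am True x prefl xu by auto
        thus ?thesis by blast
      next
        case False
        have "b \<in> up F le x" "b \<noteq> x" using b bm nm unfolding up_def Mx_def by (auto dest: maxl_F)
        hence "b = ot" using ot False by auto
        hence v1: "Valid h (x,a,b)" using \<open>h = 0 \<and> \<not> maxl x\<close> x a ot d1 by auto
        define cs where "cs = [(a,a,a),(x,a,b),(b,b,b)]"
        have "WalkOK h x a b cs" unfolding WalkOK_def cs_def
          using va vb v1 am bm x prefl xu by auto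
        thus ?thesis by blast
      qed
    qed
  next
    case nd: False
    obtain y0 where y0: "y0 \<in> F" "le x y0" "y0 \<noteq> x" "\<not> maxl y0"
      using not_dle_nonmax[OF x nd] by auto
    obtain ys where ys: "set ys = up F le x - {x}" using finite_list finite_up by blast
    obtain ps where ps: "pathOK a ps a" "\<forall>s\<in>set ps. Valid h s \<and> le x (fst s)"
      "set ys \<subseteq> (\<Union>s\<in>set ps. up F le (fst s))"
      using cover_loop[OF x dx y0, of ys a] ys a by blast
    obtain qs where qs: "pathOK a qs b" "\<forall>s\<in>set qs. Valid h s \<and> le x (fst s)"
      using path_of[OF Estar_Eh[OF x dx conn[OF x y0 a b]]] by blast
    define cs where "cs = (a,a,a) # (ps @ qs) @ [(b,b,b)]"
    have p: "pathOK a cs b" unfolding cs_def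
      using pathOK_append[OF pathOK_append[OF ps(1) qs(1)], of "[(b,b,b)]" b] by simp
    have "up F le x \<subseteq> insert x (\<Union>c\<in>set cs. up F le (fst c))"
      using ps(3) ys unfolding cs_def by auto
    hence "WalkOK h x a b cs" unfolding WalkOK_def using p ps(2) qs(2) va vb am bm
      unfolding cs_def by auto
    thus ?thesis by blast
  qed
qed

lemma walk_pad:
  assumes "WalkOK h x a b cs" shows "WalkOK h x a b (cs @ [(b,b,b)])"
proof -
  obtain mid where mid: "cs = (a,a,a) # mid @ [(b,b,b)]" using assms unfolding WalkOK_def by blast
  have p: "pathOK a cs b" using assms unfolding WalkOK_def by blast
  have "pathOK a (cs @ [(b,b,b)]) b" using pathOK_append[OF p, of "[(b,b,b)]" b] by simp
  moreover have "cs @ [(b,b,b)] = (a,a,a) # (mid @ [(b,b,b)]) @ [(b,b,b)]" using mid by simp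
  ultimately show ?thesis using assms unfolding WalkOK_def by auto
qed

end

context plf begin
lemma pathOK_nth: "pathOK a cs b \<Longrightarrow> Suc p < length cs \<Longrightarrow>
   snd (snd (cs ! p)) = fst (snd (cs ! Suc p))"
proof (induction cs arbitrary: a p)
  case Nil then show ?case by simp
next
  case (Cons c cs)
  show ?case
  proof (cases p)
    case 0
    then show ?thesis using Cons(2,3) by (cases cs) auto
  next
    case (Suc q)
    then show ?thesis using Cons by auto
  qed
qed
end

lemma div_pow_Suc: "(a::nat) div B ^ Suc e = a div B ^ e div B"
  by (metis div_mult2_eq power_Suc2)

lemma div_pow_add: "(a::nat) div B ^ (d + e) = a div B ^ e div B ^ d"
  by (metis div_mult2_eq power_add mult.commute)

locale constr = plf F le for F :: "'a set" and le +
  fixes r m :: 'a and H B :: nat and wk :: "nat \<Rightarrow> 'a \<times> 'a \<times> 'a \<Rightarrow> ('a \<times> 'a \<times> 'a) list"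
  assumes rF: "r \<in> F" and rroot: "\<forall>x\<in>F. le r x" and mm: "maxl m"
    and H1: "H \<ge> 1" and B2: "B \<ge> 2" and vr: "Valid H (r, m, m)"
    and wk: "\<And>h x a b. h < H \<Longrightarrow> Valid (Suc h) (x,a,b) \<Longrightarrow>
        WalkOK h x a b (wk h (x,a,b)) \<and> length (wk h (x,a,b)) = B"
begin

primrec st :: "nat \<Rightarrow> nat \<Rightarrow> 'a \<times> 'a \<times> 'a" where
  "st 0 j = (r, m, m)"
| "st (Suc l) j = wk (H - Suc l) (st l (j div B)) ! (j mod B)"

declare st.simps(2)[simp del]

abbreviation X where "X l j \<equiv> fst (st l j)"
abbreviation Lf where "Lf l j \<equiv> fst (snd (st l j))"
abbreviation Rt where "Rt l j \<equiv> snd (snd (st l j))"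

lemma Bpos: "B > 0" using B2 by simp

lemma st_child:
  assumes "l < H" "j < B ^ l" "p < B"
  shows "st (Suc l) (j * B + p) = wk (H - Suc l) (st l j) ! p"
  using assms Bpos by (simp add: st.simps(2))

lemma st_valid: "l \<le> H \<Longrightarrow> j < B ^ l \<Longrightarrow> Valid (H - l) (st l j)"
proof (induction l arbitrary: j)
  case 0 then show ?case using vr by simp
next
  case (Suc l)
  have jd: "j div B < B ^ l" using Suc(3) Bpos
    by (simp add: div_less_iff_less_mult mult.commute)
  have v: "Valid (H - l) (st l (j div B))" using Suc jd by simp
  obtain x a b where xab: "st l (j div B) = (x,a,b)" by (cases "st l (j div B)") auto
  have hl: "H - l = Suc (H - Suc l)" using Suc(2) by simp
  have w: "WalkOK (H - Suc l) x a b (wk (H - Suc l) (x,a,b)) \<and> length (wk (H - Suc l) (x,a,b)) = B"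
    using wk[of "H - Suc l" x a b] v xab hl Suc(2) by simp
  have "wk (H - Suc l) (x,a,b) ! (j mod B) \<in> set (wk (H - Suc l) (x,a,b))"
    using w Bpos by simp
  then show ?case using w xab unfolding WalkOK_def by (simp add: st.simps(2))
qed

lemma walk_at:
  assumes "l < H" "j < B ^ l"
  shows "WalkOK (H - Suc l) (X l j) (Lf l j) (Rt l j) (wk (H - Suc l) (st l j)) \<and>
         length (wk (H - Suc l) (st l j)) = B"
proof -
  obtain x a b where xab: "st l j = (x,a,b)" by (cases "st l j") auto
  have v: "Valid (H - l) (st l j)" using st_valid assms by simp
  have hl: "H - l = Suc (H - Suc l)" using assms by simp
  show ?thesis using wk[of "H - Suc l" x a b] v xab hl assms by simp
qed

lemma child_le:
  assumes "l < H" "j < B ^ Suc l"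
  shows "le (X l (j div B)) (X (Suc l) j)"
proof -
  have jd: "j div B < B ^ l" using assms Bpos
    by (simp add: div_less_iff_less_mult mult.commute)
  have w: "WalkOK (H - Suc l) (X l (j div B)) (Lf l (j div B)) (Rt l (j div B)) (wk (H - Suc l) (st l (j div B)))"
     "length (wk (H - Suc l) (st l (j div B))) = B"
    using walk_at[OF assms(1) jd] by auto
  have "wk (H - Suc l) (st l (j div B)) ! (j mod B) \<in> set (wk (H - Suc l) (st l (j div B)))"
    using w Bpos by simp
  then show ?thesis using w(1) unfolding WalkOK_def by (simp add: st.simps(2))
qed

lemma X_F: "l \<le> H \<Longrightarrow> j < B ^ l \<Longrightarrow> X l j \<in> F"
  using st_valid[of l j] by (cases "st l j") auto

lemma LR_Mx: "l \<le> H \<Longrightarrow> j < B ^ l \<Longrightarrow> Lf l j \<in> Mx (X l j) \<and> Rt l j \<in> Mx (X l j)"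
  using st_valid[of l j] by (cases "st l j") auto

lemma desc_le:
  "l + d \<le> H \<Longrightarrow> j < B ^ (l + d) \<Longrightarrow> le (X l (j div B ^ d)) (X (l + d) j)"
proof (induction d arbitrary: j)
  case 0 then show ?case using X_F prefl by simp
next
  case (Suc d)
  have jd: "j div B < B ^ (l + d)" using Suc(3) Bpos
    by (simp add: div_less_iff_less_mult mult.commute)
  have ih: "le (X l (j div B div B ^ d)) (X (l + d) (j div B))" using Suc jd by simp
  have c: "le (X (l + d) (j div B)) (X (Suc (l + d)) j)" using child_le[of "l + d" j] Suc by simp
  have e: "j div B ^ Suc d = j div B div B ^ d" by (simp add: div_mult2_eq power_Suc)
  have "j div B div B ^ d < B ^ l" using jd Bpos
    by (simp add: div_less_iff_less_mult power_add)
  hence F1: "X l (j div B div B ^ d) \<in> F" using X_F Suc(2) by simp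
  have F2: "X (l + d) (j div B) \<in> F" using X_F Suc(2) jd by simp
  have F3: "X (Suc (l + d)) j \<in> F" using X_F Suc by simp
  show ?case using ptrans[OF F1 F2 F3 ih c] e by simp
qed


lemma walk_ends:
  assumes "WalkOK h x a b cs"
  shows "cs ! 0 = (a,a,a)" "cs ! (length cs - 1) = (b,b,b)" "pathOK a cs b"
  using assms unfolding WalkOK_def by (auto simp: nth_append)

lemma divB_lt: "j < B ^ Suc l \<Longrightarrow> j div B < B ^ l"
  using Bpos by (simp add: div_less_iff_less_mult mult.commute)

lemma consist: "l \<le> H \<Longrightarrow> Suc j < B ^ l \<Longrightarrow> Rt l j = Lf l (Suc j)"
proof (induction l arbitrary: j)
  case 0 then show ?case by simp
next
  case (Suc l)
  define p where "p = j div B"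
  define q where "q = j mod B"
  have jpq: "j = p * B + q" unfolding p_def q_def by simp
  have qB: "q < B" unfolding q_def using Bpos by simp
  have pl: "p < B ^ l" unfolding p_def using divB_lt Suc(3) by simp
  have lH: "l < H" using Suc(2) by simp
  have w: "WalkOK (H - Suc l) (X l p) (Lf l p) (Rt l p) (wk (H - Suc l) (st l p))"
    "length (wk (H - Suc l) (st l p)) = B" using walk_at[OF lH pl] by auto
  show ?case
  proof (cases "Suc q < B")
    case True
    have e1: "st (Suc l) j = wk (H - Suc l) (st l p) ! q" using st_child[OF lH pl qB] jpq by simp
    have e2: "st (Suc l) (Suc j) = wk (H - Suc l) (st l p) ! Suc q"
      using st_child[OF lH pl True] jpq by simp
    show ?thesis using pathOK_nth[OF walk_ends(3)[OF w(1)], of q] w(2) True e1 e2 by simp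
  next
    case False
    hence qe: "q = B - 1" using qB by simp
    have sj: "Suc j = Suc p * B + 0" using jpq qe Bpos by simp
    have sp: "Suc p < B ^ l"
    proof -
      have "Suc p * B < B ^ l * B" using Suc(3) sj by (simp add: mult.commute)
      thus ?thesis using mult_less_cancel2 by blast
    qed
    have w2: "WalkOK (H - Suc l) (X l (Suc p)) (Lf l (Suc p)) (Rt l (Suc p)) (wk (H - Suc l) (st l (Suc p)))"
      "length (wk (H - Suc l) (st l (Suc p))) = B" using walk_at[OF lH sp] by auto
    have e1: "st (Suc l) j = wk (H - Suc l) (st l p) ! (B - 1)" using st_child[OF lH pl qB] jpq qe by simp
    have e2: "st (Suc l) (Suc j) = wk (H - Suc l) (st l (Suc p)) ! 0"
      using st_child[OF lH sp Bpos] sj by simp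
    have "Rt (Suc l) j = Rt l p" using e1 walk_ends(2)[OF w(1)] w(2) by simp
    moreover have "Lf (Suc l) (Suc j) = Lf l (Suc p)" using e2 walk_ends(1)[OF w2(1)] by simp
    moreover have "Rt l p = Lf l (Suc p)" using Suc.IH[of p] Suc(2) sp by simp
    ultimately show ?thesis by simp
  qed
qed

lemma left_end: "l \<le> H \<Longrightarrow> Lf l 0 = m"
proof (induction l)
  case 0 then show ?case by simp
next
  case (Suc l)
  have lH: "l < H" using Suc by simp
  have w: "WalkOK (H - Suc l) (X l 0) (Lf l 0) (Rt l 0) (wk (H - Suc l) (st l 0))"
    using walk_at[OF lH, of 0] Bpos by simp
  have "st (Suc l) 0 = wk (H - Suc l) (st l 0) ! 0" using st_child[OF lH _ Bpos, of 0] Bpos by simp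
  then show ?case using walk_ends(1)[OF w] Suc by simp
qed

lemma left_end2: "Suc l \<le> H \<Longrightarrow> st (Suc l) 0 = (m,m,m)"
proof -
  assume a: "Suc l \<le> H"
  have lH: "l < H" using a by simp
  have w: "WalkOK (H - Suc l) (X l 0) (Lf l 0) (Rt l 0) (wk (H - Suc l) (st l 0))"
    using walk_at[OF lH, of 0] Bpos by simp
  have "st (Suc l) 0 = wk (H - Suc l) (st l 0) ! 0" using st_child[OF lH _ Bpos, of 0] Bpos by simp
  then show ?thesis using walk_ends(1)[OF w] left_end[of l] lH by simp
qed

lemma pow_m1: "(B ^ Suc l - 1) = (B ^ l - 1) * B + (B - 1)"
proof -
  have "B ^ l \<ge> 1" using Bpos by simp
  then obtain t where t: "B ^ l = Suc t" by (cases "B ^ l") auto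
  obtain c where c: "B = Suc c" using Bpos by (cases B) auto
  show ?thesis using t c by (simp add: power_Suc2 algebra_simps)
qed

lemma right_end: "l \<le> H \<Longrightarrow> Rt l (B ^ l - 1) = m"
proof (induction l)
  case 0 then show ?case by simp
next
  case (Suc l)
  have lH: "l < H" using Suc by simp
  have pl: "B ^ l - 1 < B ^ l" using Bpos by simp
  have w: "WalkOK (H - Suc l) (X l (B^l-1)) (Lf l (B^l-1)) (Rt l (B^l-1)) (wk (H - Suc l) (st l (B^l-1)))"
    "length (wk (H - Suc l) (st l (B^l-1))) = B"
    using walk_at[OF lH pl] by auto
  have "st (Suc l) (B ^ Suc l - 1) = wk (H - Suc l) (st l (B^l-1)) ! (B - 1)"
    using st_child[OF lH pl, of "B - 1"] Bpos pow_m1[of l] by simp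
  then show ?case using walk_ends(2)[OF w(1)] w(2) Suc by simp
qed

lemma right_end2: "Suc l \<le> H \<Longrightarrow> st (Suc l) (B ^ Suc l - 1) = (m,m,m)"
proof -
  assume a: "Suc l \<le> H"
  have lH: "l < H" using a by simp
  have pl: "B ^ l - 1 < B ^ l" using Bpos by simp
  have w: "WalkOK (H - Suc l) (X l (B^l-1)) (Lf l (B^l-1)) (Rt l (B^l-1)) (wk (H - Suc l) (st l (B^l-1)))"
    "length (wk (H - Suc l) (st l (B^l-1))) = B"
    using walk_at[OF lH pl] by auto
  have "st (Suc l) (B ^ Suc l - 1) = wk (H - Suc l) (st l (B^l-1)) ! (B - 1)"
    using st_child[OF lH pl, of "B - 1"] Bpos pow_m1[of l] by simp
  then show ?thesis using walk_ends(2)[OF w(1)] w(2) right_end[of l] lH by simp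
qed

definition Cov where
  "Cov l j = {X l' j' | l' j'. l \<le> l' \<and> l' \<le> H \<and> j' < B ^ l' \<and> j' div B ^ (l' - l) = j}
    \<union> {Lf H i | i. i < B ^ H \<and> i div B ^ (H - l) = j} \<union> {Rt H i | i. i < B ^ H \<and> i div B ^ (H - l) = j}"

lemma Cov_child:
  assumes "l < H" "p < B"
  shows "Cov (Suc l) (j * B + p) \<subseteq> Cov l j"
proof -
  have key: "a div B ^ (l' - l) = j" if "Suc l \<le> l'" "a div B ^ (l' - Suc l) = j * B + p" for a l'
  proof -
    have "l' - l = Suc (l' - Suc l)" using that by simp
    hence "a div B ^ (l' - l) = a div B ^ (l' - Suc l) div B" using div_pow_Suc by simp
    thus ?thesis using that assms Bpos by simp
  qed
  have k2: "Suc l \<le> H" using assms by simp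
  show ?thesis unfolding Cov_def
    using key k2 by (smt (verit, ccfv_threshold) Collect_mono_iff Suc_leD Un_mono)
qed

lemma cover: "d + l = H \<Longrightarrow> j < B ^ l \<Longrightarrow> up F le (X l j) \<subseteq> Cov l j"
proof (induction d arbitrary: l j)
  case 0
  hence lH: "l = H" by simp
  have v: "Valid 0 (st H j)" using st_valid[of H j] 0 lH by simp
  have "up F le (X H j) = {X H j, Lf H j, Rt H j}" using v by (cases "st H j") auto
  moreover have "X H j \<in> Cov H j" unfolding Cov_def using 0 lH by force
  moreover have "Lf H j \<in> Cov H j" unfolding Cov_def using 0 lH by force
  moreover have "Rt H j \<in> Cov H j" unfolding Cov_def using 0 lH by force
  ultimately show ?case using lH by simp
next
  case (Suc d)
  have lH: "l < H" using Suc(2) by simp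
  have w: "WalkOK (H - Suc l) (X l j) (Lf l j) (Rt l j) (wk (H - Suc l) (st l j))"
    "length (wk (H - Suc l) (st l j)) = B" using walk_at[OF lH Suc(3)] by auto
  have cov: "up F le (X l j) \<subseteq> insert (X l j) (\<Union>c\<in>set (wk (H - Suc l) (st l j)). up F le (fst c))"
    using w(1) unfolding WalkOK_def by blast
  have xin: "X l j \<in> Cov l j" unfolding Cov_def using Suc(3) lH by force
  have "up F le (fst c) \<subseteq> Cov l j" if c: "c \<in> set (wk (H - Suc l) (st l j))" for c
  proof -
    obtain p where p: "p < B" "c = wk (H - Suc l) (st l j) ! p" using c w(2) by (auto simp: in_set_conv_nth)
    have e: "st (Suc l) (j * B + p) = c" using st_child[OF lH Suc(3) p(1)] p by simp
    have jb: "j * B + p < B ^ Suc l"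
    proof -
      have "j * B + p < (j + 1) * B" using p by simp
      also have "\<dots> \<le> B ^ l * B" using Suc(3) by (intro mult_right_mono) auto
      finally show ?thesis by (simp add: mult.commute)
    qed
    have "up F le (X (Suc l) (j * B + p)) \<subseteq> Cov (Suc l) (j * B + p)"
      using Suc.IH[of "Suc l" "j * B + p"] Suc(2) jb by simp
    thus ?thesis using e Cov_child[OF lH p(1), of j] by auto
  qed
  then show ?case using cov xin by blast
qed

end

context constr begin

definition lv :: "nat \<Rightarrow> nat" where "lv u = fst (prod_decode u)"
definition ix :: "nat \<Rightarrow> nat" where "ix u = snd (prod_decode u)"
definition enc :: "nat \<Rightarrow> nat \<Rightarrow> nat" where "enc l j = prod_encode (l, j)"
definition TT :: "nat set" where "TT = {u. lv u \<le> H \<and> ix u < B ^ lv u}"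
definition leT :: "nat \<Rightarrow> nat \<Rightarrow> bool" where
  "leT u v \<longleftrightarrow> lv u \<le> lv v \<and> ix v div B ^ (lv v - lv u) = ix u"
definition tsl :: "nat list" where "tsl = map (\<lambda>i. enc H i) [0..<B ^ H]"
definition ff :: "nat + nat \<Rightarrow> 'a" where
  "ff z = (case z of Inl u \<Rightarrow> X (lv u) (ix u) | Inr i \<Rightarrow> Rt H i)"

lemma lv_enc[simp]: "lv (enc l j) = l" by (simp add: lv_def enc_def)
lemma ix_enc[simp]: "ix (enc l j) = j" by (simp add: ix_def enc_def)
lemma enc_lv_ix: "enc (lv u) (ix u) = u" by (simp add: lv_def ix_def enc_def)
lemma u_eq: "lv u = lv v \<Longrightarrow> ix u = ix v \<Longrightarrow> u = v" by (metis enc_lv_ix)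
lemma enc_inj: "enc l j = enc l' j' \<longleftrightarrow> l = l' \<and> j = j'" by (metis lv_enc ix_enc)

lemma K2: "B ^ H \<ge> 2"
proof -
  have "B ^ 1 \<le> B ^ H" using H1 Bpos by (intro power_increasing) auto
  thus ?thesis using B2 by simp
qed

lemma tsl_len[simp]: "length tsl = B ^ H" by (simp add: tsl_def)
lemma tsl_nth: "i < B ^ H \<Longrightarrow> tsl ! i = enc H i" by (simp add: tsl_def)

lemma TT_enc: "enc l j \<in> TT \<longleftrightarrow> l \<le> H \<and> j < B ^ l" by (simp add: TT_def)

lemma leT_enc: "leT u (enc l j) \<longleftrightarrow> lv u \<le> l \<and> j div B ^ (l - lv u) = ix u"
  by (simp add: leT_def)

lemma finite_TT: "finite TT"
proof -
  have "TT \<subseteq> (\<lambda>(l,j). enc l j) ` ({..H} \<times> {..<B ^ H})"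
  proof
    fix u assume u: "u \<in> TT"
    have "B ^ lv u \<le> B ^ H" using u Bpos by (intro power_increasing) (auto simp: TT_def)
    hence "ix u < B ^ H" using u by (auto simp: TT_def)
    thus "u \<in> (\<lambda>(l,j). enc l j) ` ({..H} \<times> {..<B ^ H})"
      using u enc_lv_ix[of u] by (force simp: TT_def)
  qed
  thus ?thesis by (rule finite_subset) auto
qed

lemma leT_refl: "leT u u" by (simp add: leT_def)

lemma leT_antisym: "leT u v \<Longrightarrow> leT v u \<Longrightarrow> u = v"
  by (auto simp: leT_def intro: u_eq)

lemma leT_trans: "leT u v \<Longrightarrow> leT v w \<Longrightarrow> leT u w"
proof -
  assume a: "leT u v" "leT v w"
  have "lv w - lv u = (lv v - lv u) + (lv w - lv v)" using a by (simp add: leT_def)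
  hence "ix w div B ^ (lv w - lv u) = ix w div B ^ (lv w - lv v) div B ^ (lv v - lv u)"
    using div_pow_add by simp
  thus ?thesis using a by (simp add: leT_def)
qed

lemma root_TT: "enc 0 0 \<in> TT" by (simp add: TT_enc)

lemma leT_root: "u \<in> TT \<Longrightarrow> leT (enc 0 0) u"
  by (simp add: leT_def TT_def)

lemma down_chain: "u \<in> TT \<Longrightarrow> is_chain leT (down TT leT u)"
  unfolding is_chain_def down_def
proof (intro ballI)
  fix v w assume u: "u \<in> TT" and v: "v \<in> {y \<in> TT. leT y u}" and w: "w \<in> {y \<in> TT. leT y u}"
  have v': "lv v \<le> lv u" "ix u div B ^ (lv u - lv v) = ix v" using v by (auto simp: leT_def)
  have w': "lv w \<le> lv u" "ix u div B ^ (lv u - lv w) = ix w" using w by (auto simp: leT_def)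
  show "leT v w \<or> leT w v"
  proof (cases "lv v \<le> lv w")
    case True
    have "lv u - lv v = (lv w - lv v) + (lv u - lv w)" using True w' by simp
    hence "ix v = ix w div B ^ (lv w - lv v)" using v' w' div_pow_add by metis
    thus ?thesis using True by (simp add: leT_def)
  next
    case False
    have "lv u - lv w = (lv v - lv w) + (lv u - lv v)" using False v' by simp
    hence "ix w = ix v div B ^ (lv v - lv w)" using v' w' div_pow_add by metis
    thus ?thesis using False by (simp add: leT_def)
  qed
qed

lemma finite_tree_TT: "finite_tree TT leT"
  unfolding finite_tree_def finite_rooted_poset_def is_poset_def is_root_def
  using finite_TT leT_refl leT_antisym leT_trans root_TT leT_root down_chain by blast

lemma chain_lv_inj: "is_chain leT C \<Longrightarrow> inj_on lv C"
  unfolding inj_on_def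
proof (intro ballI impI)
  fix u v assume c: "is_chain leT C" and uv: "u \<in> C" "v \<in> C" "lv u = lv v"
  have "leT u v \<or> leT v u" using c uv unfolding is_chain_def by blast
  hence "ix u = ix v" using uv(3) by (auto simp: leT_def)
  thus "u = v" using uv(3) u_eq by blast
qed

lemma chain_card_TT: "C \<subseteq> TT \<Longrightarrow> is_chain leT C \<Longrightarrow> card C \<le> Suc H"
proof -
  assume a: "C \<subseteq> TT" "is_chain leT C"
  have "card C = card (lv ` C)" using chain_lv_inj[OF a(2)] by (simp add: card_image)
  also have "\<dots> \<le> card {..H}" using a by (intro card_mono) (auto simp: TT_def)
  finally show ?thesis by simp
qed

definition spine where "spine = (\<lambda>l. enc l 0) ` {..H}"

lemma spine_sub: "spine \<subseteq> TT" unfolding spine_def using Bpos by (auto simp: TT_enc)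
lemma spine_chain: "is_chain leT spine" unfolding spine_def is_chain_def
  by (auto simp: leT_enc)
lemma spine_card: "card spine = Suc H"
proof -
  have "inj_on (\<lambda>l. enc l 0) {..H}" by (auto simp: inj_on_def enc_inj)
  thus ?thesis unfolding spine_def by (simp add: card_image)
qed

lemma height_TT: "has_height TT leT H"
  unfolding has_height_def
proof (intro conjI allI impI)
  show "\<exists>C\<subseteq>TT. is_chain leT C \<and> finite C \<and> card C = H + 1"
    using spine_sub spine_chain spine_card finite_TT
    by (intro exI[of _ spine]) (auto intro: rev_finite_subset)
  fix C assume C: "C \<subseteq> TT \<and> is_chain leT C"
  show "finite C" using C finite_TT by (auto intro: rev_finite_subset)
  show "card C \<le> H + 1" using C chain_card_TT by simp
qed

lemma tops_TT: "tops TT leT = {u \<in> TT. lv u = H}"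
proof
  show "tops TT leT \<subseteq> {u \<in> TT. lv u = H}"
  proof
    fix u assume u: "u \<in> tops TT leT"
    have uT: "u \<in> TT" using u by (simp add: tops_def)
    show "u \<in> {u \<in> TT. lv u = H}"
    proof (rule ccontr)
      assume "u \<notin> {u \<in> TT. lv u = H}"
      hence lt: "lv u < H" using uT by (auto simp: TT_def)
      define v where "v = enc (Suc (lv u)) (ix u * B)"
      have "ix u * B < B ^ Suc (lv u)" using uT Bpos by (simp add: TT_def mult.commute)
      hence vT: "v \<in> TT" using lt by (simp add: v_def TT_enc)
      have "leT u v" using Bpos by (simp add: v_def leT_enc)
      moreover have "v \<noteq> u" using lv_enc[of "Suc (lv u)"] by (metis v_def n_not_Suc_n)
      ultimately show False using u vT by (auto simp: tops_def)
    qed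
  qed
next
  show "{u \<in> TT. lv u = H} \<subseteq> tops TT leT"
  proof
    fix u assume u: "u \<in> {u \<in> TT. lv u = H}"
    have "\<forall>y\<in>TT. leT u y \<longrightarrow> y = u"
    proof (intro ballI impI)
      fix y assume y: "y \<in> TT" "leT u y"
      have "lv y = H" using y u by (auto simp: TT_def leT_def)
      thus "y = u" using y u by (auto simp: leT_def intro: u_eq)
    qed
    thus "u \<in> tops TT leT" using u by (simp add: tops_def)
  qed
qed

lemma down_top: "i < B ^ H \<Longrightarrow> down TT leT (enc H i) = (\<lambda>l. enc l (i div B ^ (H - l))) ` {..H}"
proof
  assume i: "i < B ^ H"
  show "down TT leT (enc H i) \<subseteq> (\<lambda>l. enc l (i div B ^ (H - l))) ` {..H}"
  proof
    fix v assume "v \<in> down TT leT (enc H i)"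
    hence v: "v \<in> TT" "leT v (enc H i)" by (auto simp: down_def)
    hence h: "lv v \<le> H" "ix v = i div B ^ (H - lv v)" by (auto simp: leT_enc)
    have "v = (\<lambda>l. enc l (i div B ^ (H - l))) (lv v)" using enc_lv_ix[of v] h(2) by simp
    thus "v \<in> (\<lambda>l. enc l (i div B ^ (H - l))) ` {..H}"
      using h(1) by (intro image_eqI[where x="lv v"]) auto
  qed
  show "(\<lambda>l. enc l (i div B ^ (H - l))) ` {..H} \<subseteq> down TT leT (enc H i)"
  proof
    fix v assume "v \<in> (\<lambda>l. enc l (i div B ^ (H - l))) ` {..H}"
    then obtain l where l: "l \<le> H" "v = enc l (i div B ^ (H - l))" by auto
    have "B ^ H = B ^ (H - l) * B ^ l" using l by (metis le_add_diff_inverse2 power_add)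
    hence "i div B ^ (H - l) < B ^ l" using i Bpos
      by (simp add: div_less_iff_less_mult mult.commute)
    thus "v \<in> down TT leT (enc H i)" using l by (simp add: down_def TT_enc leT_enc)
  qed
qed

lemma card_down_top: "i < B ^ H \<Longrightarrow> card (down TT leT (enc H i)) = Suc H"
proof -
  assume i: "i < B ^ H"
  have "inj_on (\<lambda>l. enc l (i div B ^ (H - l))) {..H}" by (auto simp: inj_on_def enc_inj)
  thus ?thesis using down_top[OF i] by (simp add: card_image)
qed

lemma tops_enc: "tops TT leT = enc H ` {..<B ^ H}"
proof -
  have "{u \<in> TT. lv u = H} = enc H ` {..<B ^ H}"
  proof
    show "{u \<in> TT. lv u = H} \<subseteq> enc H ` {..<B ^ H}"
    proof
      fix u assume u: "u \<in> {u \<in> TT. lv u = H}"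
      hence "u = enc H (ix u)" "ix u < B ^ H" using enc_lv_ix[of u] by (auto simp: TT_def)
      thus "u \<in> enc H ` {..<B ^ H}" by blast
    qed
    show "enc H ` {..<B ^ H} \<subseteq> {u \<in> TT. lv u = H}" by (auto simp: TT_enc)
  qed
  thus ?thesis using tops_TT by simp
qed

lemma plane_TT: "plane_enum TT leT tsl"
  unfolding plane_enum_def
proof (intro conjI ballI allI impI)
  show "distinct tsl" unfolding tsl_def by (simp add: distinct_map inj_on_def enc_inj)
  show "set tsl = tops TT leT" unfolding tsl_def tops_enc by auto
  fix x i j l assume x: "x \<in> TT" and a: "i < j \<and> j < l \<and> l < length tsl \<and> leT x (tsl ! i) \<and> leT x (tsl ! l)"
  have lens: "i < B ^ H" "j < B ^ H" "l < B ^ H" using a by auto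
  have h1: "i div B ^ (H - lv x) = ix x" "l div B ^ (H - lv x) = ix x" "lv x \<le> H"
    using a lens by (auto simp: tsl_nth leT_enc)
  have "i div B ^ (H - lv x) \<le> j div B ^ (H - lv x)" "j div B ^ (H - lv x) \<le> l div B ^ (H - lv x)"
    using a by (auto intro: div_le_mono)
  hence "j div B ^ (H - lv x) = ix x" using h1 by simp
  thus "leT x (tsl ! j)" using lens h1 by (simp add: tsl_nth leT_enc)
qed

lemma sawed_data: "sawed_tree_data TT leT tsl"
  unfolding sawed_tree_data_def
proof (intro conjI)
  show "finite_tree TT leT" by (rule finite_tree_TT)
  show "\<exists>m>0. has_height TT leT m" using height_TT H1 by (intro exI[of _ H]) auto
  show "\<forall>t\<in>tops TT leT. \<forall>t'\<in>tops TT leT. card (down TT leT t) = card (down TT leT t')"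
    unfolding tops_enc using card_down_top by auto
  show "plane_enum TT leT tsl" by (rule plane_TT)
qed

end

context constr begin

abbreviation G where "G \<equiv> sawed_carrier TT tsl"
abbreviation leG where "leG \<equiv> sawed_le leT tsl"

lemma G_def2: "G = Inl ` TT \<union> Inr ` {i. Suc i < B ^ H}"
  by (simp add: sawed_carrier_def)

lemma up_Inl: "u \<in> TT \<Longrightarrow> up G leG (Inl u) =
   Inl ` {v \<in> TT. leT u v} \<union> Inr ` {i. Suc i < B ^ H \<and> (leT u (enc H i) \<or> leT u (enc H (Suc i)))}"
  unfolding up_def G_def2 by (auto simp: tsl_nth)

lemma up_Inr: "Suc i < B ^ H \<Longrightarrow> up G leG (Inr i) = {Inr i}"
  unfolding up_def G_def2 by auto

lemma ff_Inl[simp]: "ff (Inl u) = X (lv u) (ix u)" by (simp add: ff_def)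
lemma ff_Inr[simp]: "ff (Inr i) = Rt H i" by (simp add: ff_def)

lemma top_above:
  assumes u: "u \<in> TT" and i: "i < B ^ H" and le: "leT u (enc H i)"
  shows "le (X (lv u) (ix u)) (X H i)"
proof -
  have l: "lv u \<le> H" "i div B ^ (H - lv u) = ix u" using le by (auto simp: leT_enc)
  show ?thesis using desc_le[of "lv u" "H - lv u" i] l i by simp
qed

lemma node_above:
  assumes u: "u \<in> TT" and v: "v \<in> TT" and le: "leT u v"
  shows "le (X (lv u) (ix u)) (X (lv v) (ix v))"
proof -
  have l: "lv u \<le> lv v" "ix v div B ^ (lv v - lv u) = ix u" using le by (auto simp: leT_def)
  have "lv v \<le> H" "ix v < B ^ lv v" using v by (auto simp: TT_def)
  thus ?thesis using desc_le[of "lv u" "lv v - lv u" "ix v"] l by simp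
qed

lemma XF_TT: "u \<in> TT \<Longrightarrow> X (lv u) (ix u) \<in> F" using X_F by (auto simp: TT_def)

lemma maxl_of_Mx: "c \<in> Mx x \<Longrightarrow> maxl c \<and> le x c" by (simp add: Mx_def)

lemma img_Inl:
  assumes u: "u \<in> TT"
  shows "ff ` up G leG (Inl u) = up F le (X (lv u) (ix u))"
proof
  have uH: "lv u \<le> H" "ix u < B ^ lv u" using u by (auto simp: TT_def)
  have xu: "X (lv u) (ix u) \<in> F" using XF_TT u by blast
  show "ff ` up G leG (Inl u) \<subseteq> up F le (X (lv u) (ix u))"
  proof
    fix z assume "z \<in> ff ` up G leG (Inl u)"
    then consider (a) v where "v \<in> TT" "leT u v" "z = X (lv v) (ix v)"
      | (b) i where "Suc i < B ^ H" "leT u (enc H i)" "z = Rt H i"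
      | (c) i where "Suc i < B ^ H" "leT u (enc H (Suc i))" "z = Rt H i"
      using up_Inl[OF u] by auto
    then show "z \<in> up F le (X (lv u) (ix u))"
    proof cases
      case a
      then show ?thesis using node_above[OF u a(1,2)] XF_TT[OF a(1)] by (simp add: up_def)
    next
      case b
      have i: "i < B ^ H" using b by simp
      have l1: "le (X (lv u) (ix u)) (X H i)" using top_above[OF u i b(2)] .
      have mx: "maxl (Rt H i) \<and> le (X H i) (Rt H i)" using LR_Mx[of H i] i maxl_of_Mx by blast
      have "le (X (lv u) (ix u)) (Rt H i)"
        using ptrans[OF xu X_F[of H i] maxl_F] l1 mx i by blast
      then show ?thesis using b mx maxl_F by (simp add: up_def)
    next
      case c
      have i: "Suc i < B ^ H" using c by simp
      have l1: "le (X (lv u) (ix u)) (X H (Suc i))" using top_above[OF u i c(2)] .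
      have eq: "Rt H i = Lf H (Suc i)" using consist[of H i] i by simp
      have mx: "maxl (Lf H (Suc i)) \<and> le (X H (Suc i)) (Lf H (Suc i))"
        using LR_Mx[of H "Suc i"] i maxl_of_Mx by blast
      have "le (X (lv u) (ix u)) (Lf H (Suc i))"
        using ptrans[OF xu X_F[of H "Suc i"] maxl_F] l1 mx i by blast
      then show ?thesis using c mx maxl_F eq by (simp add: up_def)
    qed
  qed
  show "up F le (X (lv u) (ix u)) \<subseteq> ff ` up G leG (Inl u)"
  proof
    fix z assume z: "z \<in> up F le (X (lv u) (ix u))"
    have "z \<in> Cov (lv u) (ix u)" using cover[of "H - lv u" "lv u" "ix u"] uH z by auto
    then consider (a) l' j' where "lv u \<le> l'" "l' \<le> H" "j' < B ^ l'" "j' div B ^ (l' - lv u) = ix u" "z = X l' j'"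
      | (b) i where "i < B ^ H" "i div B ^ (H - lv u) = ix u" "z = Lf H i"
      | (c) i where "i < B ^ H" "i div B ^ (H - lv u) = ix u" "z = Rt H i"
      unfolding Cov_def by blast
    then show "z \<in> ff ` up G leG (Inl u)"
    proof cases
      case a
      have "Inl (enc l' j') \<in> up G leG (Inl u)" using up_Inl[OF u] a by (simp add: TT_enc leT_enc)
      moreover have "ff (Inl (enc l' j')) = z" using a by simp
      ultimately show ?thesis by (metis image_eqI)
    next
      case b
      show ?thesis
      proof (cases i)
        case 0
        have "Lf H 0 = m" using left_end[of H] by simp
        moreover have "st H 0 = (m,m,m)" using left_end2[of "H - 1"] H1 by simp
        ultimately have zz: "z = X H 0" using b 0 by simp
        have "Inl (enc H 0) \<in> up G leG (Inl u)" using up_Inl[OF u] b 0 uH K2 Bpos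
          by (simp add: TT_enc leT_enc)
        thus ?thesis using zz by (metis ff_Inl ix_enc lv_enc image_eqI)
      next
        case (Suc i')
        have eq: "Rt H i' = Lf H i" using consist[of H i'] b Suc by simp
        have "Inr i' \<in> up G leG (Inl u)" using up_Inl[OF u] b Suc uH by (simp add: leT_enc)
        thus ?thesis using eq b by (metis ff_Inr image_eqI)
      qed
    next
      case c
      show ?thesis
      proof (cases "Suc i < B ^ H")
        case True
        have "Inr i \<in> up G leG (Inl u)" using up_Inl[OF u] c True uH by (simp add: leT_enc)
        thus ?thesis using c by (metis ff_Inr image_eqI)
      next
        case False
        hence ie: "i = B ^ H - 1" using c by simp
        have "Rt H (B ^ H - 1) = m" using right_end[of H] by simp
        moreover have "st H (B ^ H - 1) = (m,m,m)" using right_end2[of "H - 1"] H1 by simp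
        ultimately have zz: "z = X H i" using c ie by simp
        have "Inl (enc H i) \<in> up G leG (Inl u)" using up_Inl[OF u] c uH
          by (simp add: TT_enc leT_enc)
        thus ?thesis using zz by (metis ff_Inl ix_enc lv_enc image_eqI)
      qed
    qed
  qed
qed

lemma pmorph: "p_morphism G leG F le ff"
  unfolding p_morphism_def
proof (intro conjI ballI)
  fix z assume z: "z \<in> G"
  then consider (l) u where "u \<in> TT" "z = Inl u" | (r) i where "Suc i < B ^ H" "z = Inr i"
    unfolding G_def2 by blast
  then show "ff z \<in> F"
  proof cases
    case l then show ?thesis using XF_TT by simp
  next
    case r
    have i: "i < B ^ H" using r by simp
    have "maxl (Rt H i)" using LR_Mx[of H i] i maxl_of_Mx by blast
    thus ?thesis using r maxl_F by simp
  qed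
  from \<open>z \<in> G\<close> consider (l) u where "u \<in> TT" "z = Inl u" | (r) i where "Suc i < B ^ H" "z = Inr i"
    unfolding G_def2 by blast
  then show "ff ` up G leG z = up F le (ff z)"
  proof cases
    case l then show ?thesis using img_Inl by simp
  next
    case r
    have i: "i < B ^ H" using r by simp
    have "maxl (Rt H i)" using LR_Mx[of H i] i maxl_of_Mx by blast
    then show ?thesis using r up_Inr up_maxl by simp
  qed
qed

lemma surj_pm: "surj_p_morphism G leG F le ff"
  unfolding surj_p_morphism_def
proof (intro conjI)
  show pm: "p_morphism G leG F le ff" by (rule pmorph)
  show "ff ` G = F"
  proof
    show "ff ` G \<subseteq> F" using pm unfolding p_morphism_def by blast
    have r0: "enc 0 0 \<in> TT" by (rule root_TT)
    have "ff ` up G leG (Inl (enc 0 0)) = up F le r" using img_Inl[OF r0] by simp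
    moreover have "up F le r = F" using rroot unfolding up_def by blast
    moreover have "up G leG (Inl (enc 0 0)) \<subseteq> G" unfolding up_def by blast
    ultimately show "F \<subseteq> ff ` G" by blast
  qed
qed

lemma G_height: "has_height G leG (Suc H)"
  unfolding has_height_def
proof (intro conjI allI impI)
  define C :: "(nat + nat) set" where "C = insert (Inr 0) (Inl ` spine)"
  have "Inr 0 \<in> G" using K2 G_def2 by simp
  hence CG: "C \<subseteq> G" unfolding C_def G_def2 using spine_sub by auto
  have t0: "tsl ! 0 = enc H 0" using K2 tsl_nth[of 0] Bpos by simp
  have ch: "is_chain leG C" unfolding C_def is_chain_def spine_def using K2
    by (auto simp: t0 leT_enc)
  have fs: "finite spine" using finite_TT spine_sub rev_finite_subset by blast
  have "card (Inl ` spine :: (nat + nat) set) = Suc H" using spine_card by (simp add: card_image)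
  moreover have "Inr 0 \<notin> (Inl ` spine :: (nat + nat) set)" by auto
  ultimately have "card C = Suc (Suc H)" unfolding C_def using fs by simp
  moreover have "finite C" unfolding C_def using finite_TT spine_sub rev_finite_subset by blast
  ultimately show "\<exists>C\<subseteq>G. is_chain leG C \<and> finite C \<and> card C = Suc H + 1"
    using CG ch by auto
  have "{i. Suc i < B ^ H} \<subseteq> {..<B ^ H}" by auto
  hence "finite {i. Suc i < B ^ H}" using finite_subset by blast
  hence finG: "finite G" unfolding G_def2 using finite_TT by simp
  fix C assume C: "C \<subseteq> G \<and> is_chain leG C"
  show "finite C" using C finG rev_finite_subset by blast
  define C1 where "C1 = {u. Inl u \<in> C}"
  define C2 where "C2 = {i. Inr i \<in> C}"
  have Ceq: "C = Inl ` C1 \<union> Inr ` C2"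
  proof
    show "C \<subseteq> Inl ` C1 \<union> Inr ` C2"
    proof
      fix z assume "z \<in> C"
      thus "z \<in> Inl ` C1 \<union> Inr ` C2" unfolding C1_def C2_def by (cases z) auto
    qed
    show "Inl ` C1 \<union> Inr ` C2 \<subseteq> C" unfolding C1_def C2_def by auto
  qed
  have C1T: "C1 \<subseteq> TT"
  proof
    fix u assume "u \<in> C1"
    hence "Inl u \<in> G" using C unfolding C1_def by blast
    thus "u \<in> TT" unfolding G_def2 by auto
  qed
  have C1ch: "is_chain leT C1" unfolding is_chain_def
  proof (intro ballI)
    fix u v assume "u \<in> C1" "v \<in> C1"
    hence "Inl u \<in> C" "Inl v \<in> C" unfolding C1_def by auto
    hence "leG (Inl u) (Inl v) \<or> leG (Inl v) (Inl u)" using C unfolding is_chain_def by blast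
    thus "leT u v \<or> leT v u" by simp
  qed
  have "card C1 \<le> Suc H" using chain_card_TT[OF C1T C1ch] .
  have C2s: "C2 \<subseteq> {i}" if "i \<in> C2" for i
  proof
    fix k assume "k \<in> C2"
    hence "leG (Inr i) (Inr k) \<or> leG (Inr k) (Inr i)" using that C unfolding C2_def is_chain_def by blast
    thus "k \<in> {i}" by auto
  qed
  have "card C2 \<le> 1"
  proof (cases "C2 = {}")
    case True then show ?thesis by simp
  next
    case False
    then obtain i where "i \<in> C2" by blast
    hence "card C2 \<le> card {i}" using C2s by (intro card_mono) auto
    thus ?thesis by simp
  qed
  have "C2 = Inr -` C" unfolding C2_def by auto
  hence fC2: "finite C2" using \<open>finite C\<close> finite_vimageI[of C Inr] by simp
  have "card C \<le> card (Inl ` C1 :: (nat + nat) set) + card (Inr ` C2 :: (nat + nat) set)" unfolding Ceq by (rule card_Un_le)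
  also have "\<dots> \<le> card C1 + card C2" by (intro add_mono card_image_le) (use C1T finite_TT rev_finite_subset fC2 in auto)
  also have "\<dots> \<le> Suc H + 1" using \<open>card C1 \<le> Suc H\<close> \<open>card C2 \<le> 1\<close> by simp
  finally show "card C \<le> Suc H + 1" .
qed

end


lemma common_bound:
  assumes fS: "finite S" and ex: "\<forall>s\<in>S. \<exists>k. P s k"
    and mono: "\<forall>s k. s \<in> S \<longrightarrow> P s k \<longrightarrow> P s (Suc k)"
  shows "\<exists>B\<ge>2. \<forall>s\<in>S. P s B"
proof -
  define kk where "kk s = (SOME k. P s k)" for s
  have pk: "P s (kk s)" if "s \<in> S" for s using ex that unfolding kk_def by (meson someI_ex)
  have madd: "P s (k + d)" if "s \<in> S" "P s k" for s k d
    using that by (induction d) (auto simp: mono)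
  define B where "B = Max (insert 2 (kk ` S))"
  have fin: "finite (insert 2 (kk ` S))" using fS by simp
  have B2: "B \<ge> 2" unfolding B_def using fin by (simp add: Max_ge)
  have "P s B" if s: "s \<in> S" for s
  proof -
    have "kk s \<le> B" unfolding B_def using fin s by (simp add: Max_ge)
    hence "B = kk s + (B - kk s)" by simp
    thus ?thesis using madd[OF s pk[OF s], of "B - kk s"] by simp
  qed
  thus ?thesis using B2 by blast
qed

theorem lemma7p8:
  fixes F :: "'a set" and le :: "'a \<Rightarrow> 'a \<Rightarrow> bool" and n :: nat
  assumes "n \<ge> 2"
    and "finite_rooted_poset F le"
    and "has_height F le n"
    and "validates_PL F le"
  shows "\<exists>(T :: nat set) leT ts f.
           sawed_tree_data T leT ts \<and>
           has_height (sawed_carrier T ts) (sawed_le leT ts) n \<and>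
           surj_p_morphism (sawed_carrier T ts) (sawed_le leT ts) F le f"
proof -
  have fin: "finite F" and po: "is_poset F le" using assms(2) unfolding finite_rooted_poset_def by auto
  obtain r where r: "is_root F le r" using assms(2) unfolding finite_rooted_poset_def by auto
  interpret plf F le using fin po assms(4) by unfold_locales
  have rF: "r \<in> F" and rroot: "\<forall>x\<in>F. le r x" using r unfolding is_root_def by auto
  obtain m where m: "maxl m" "le r m" using exists_max rF by blast
  define H where "H = n - 1"
  have H1: "H \<ge> 1" using assms(1) unfolding H_def by simp
  have nH: "n = Suc H" using assms(1) unfolding H_def by simp
  have dr: "dle r (Suc H)" unfolding dle_def
  proof (intro allI impI)
    fix C assume C: "C \<subseteq> up F le r \<and> is_chain le C"
    hence "C \<subseteq> F" using up_sub by blast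
    hence "card C \<le> n + 1" using assms(3) C unfolding has_height_def by blast
    thus "card C \<le> Suc (Suc H)" using nH by simp
  qed
  have vr: "Valid H (r, m, m)" using rF m dr H1 by (simp add: Mx_def)
  define S where "S = {(h, x, a, b). h < H \<and> Valid (Suc h) (x,a,b)}"
  have Ssub: "S \<subseteq> {..<H} \<times> F \<times> F \<times> F" unfolding S_def using Mx_F by auto
  have fS: "finite S" using finite_subset[OF Ssub] fin by simp
  define P where "P s k = (\<exists>cs. WalkOK (fst s) (fst (snd s)) (fst (snd (snd s))) (snd (snd (snd s))) cs \<and> length cs = k)" for s k
  have ex: "\<forall>s\<in>S. \<exists>k. P s k"
  proof
    fix s assume "s \<in> S"
    then obtain h x a b where s: "s = (h,x,a,b)" "Valid (Suc h) (x,a,b)" unfolding S_def by auto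
    obtain cs where "WalkOK h x a b cs" using walk_exists[OF s(2)] by blast
    thus "\<exists>k. P s k" unfolding P_def s by auto
  qed
  have mono: "\<forall>s k. s \<in> S \<longrightarrow> P s k \<longrightarrow> P s (Suc k)"
  proof (intro allI impI)
    fix s k assume "s \<in> S" "P s k"
    then obtain h x a b where s: "s = (h,x,a,b)" unfolding S_def by auto
    obtain cs where cs: "WalkOK h x a b cs" "length cs = k" using \<open>P s k\<close> unfolding P_def s by auto
    have "WalkOK h x a b (cs @ [(b,b,b)])" using walk_pad[OF cs(1)] .
    thus "P s (Suc k)" unfolding P_def s using cs(2) by (intro exI[of _ "cs @ [(b,b,b)]"]) simp
  qed
  obtain B where B: "B \<ge> 2" "\<forall>s\<in>S. P s B" using common_bound[OF fS ex mono] by blast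
  define wk where "wk h s = (SOME cs. WalkOK h (fst s) (fst (snd s)) (snd (snd s)) cs \<and> length cs = B)" for h s
  have wkok: "WalkOK h x a b (wk h (x,a,b)) \<and> length (wk h (x,a,b)) = B"
    if "h < H" "Valid (Suc h) (x,a,b)" for h x a b
  proof -
    have "(h,x,a,b) \<in> S" using that unfolding S_def by simp
    hence "P (h,x,a,b) B" using B(2) by blast
    hence "\<exists>cs. WalkOK h x a b cs \<and> length cs = B" unfolding P_def by simp
    hence "WalkOK h x a b (SOME cs. WalkOK h x a b cs \<and> length cs = B) \<and>
           length (SOME cs. WalkOK h x a b cs \<and> length cs = B) = B"
      by (rule someI_ex)
    thus ?thesis unfolding wk_def by simp
  qed
  interpret constr F le r m H B wk
    using rF rroot m(1) H1 B(1) vr wkok by unfold_locales auto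
  show ?thesis
    using sawed_data G_height surj_pm nH by blast
qed

end
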